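(* Let $\mathcal U$ be a $k$-universe with $\bigcup\mathcal U\subseteq\Lambda$, $\mu$ a one-wise independent distribution on $\mathbb Z_N^k$, and $M\in\mathcal M_{\mathcal U,m}$ with $m\le|\mathcal U|$. For every $f:\mathrm{Map}(M,\mathbb Z_N^k)\to\mathbb C$ and every $b\in\mathbb Z_N^\Lambda$: if $b=[\mathbf a]$ for some $\mathbf a\in\mathcal X(M)$ then $|\langle\boldsymbol R^{\Lambda,M}_\mu[f],\chi_b\rangle|\le|\widehat f(\mathbf a)|$; and if $b\neq[\mathbf a]$ for all $\mathbf a\in\mathcal X(M)$ then $\langle\boldsymbol R^{\Lambda,M}_\mu[f],\chi_b\rangle=0$.
   Context: $N\ge2$, $\mathbb Z_N=\mathbb Z/N\mathbb Z$. A $k$-universe $\mathcal U=(U_1,\dots,U_k)$ is a tuple of finite sets of common size $|\mathcal U|$; $\mathcal M_{\mathcal U,m}$ is the set of $m$-element sets of pairwise vertex-disjoint tuples in $U_1\times\dots\times U_k$. $\mu$ one-wise independent means each coordinate marginal of $\mu$ is uniform; $\mu(\cdot)$ is its pmf. For $e=(v_1,\dots,v_k)$, $x_{|e}=(x_{v_1},\dots,x_{v_k})$. $\boldsymbol R^{\Lambda,M}_\mu[f](x)=\sum_{\xi:M\to\mathbb Z_N^k}\big(\prod_{e\in M}\mu(x_{|e}-\xi(e))\big)f(\xi)$. Inner products are $\langle g,h\rangle=\mathbb E_x[g(x)\overline{h(x)}]$ with $x$ uniform; $\chi_b(x)=\exp(\frac{2\pi\mathrm i}{N}\sum_{v\in\Lambda}b_vx_v)$.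 For $\mathbf a:M\to\mathbb Z_N^k$, $\psi_{\mathbf a}(\xi)=\prod_{e\in M}\chi_{\mathbf a(e)}(\xi(e))$ (with $\chi_t(w)=\exp(\frac{2\pi\mathrm i}{N}\sum_i t_iw_i)$ on $\mathbb Z_N^k$) and $\widehat f(\mathbf a)=\langle f,\psi_{\mathbf a}\rangle$ (expectation over uniform $\xi$). $\mathcal X(M)$ is the set of $\mathbf a:M\to\mathbb Z_N^k$ such that $\mathbf a(e)$ does not have exactly one nonzero coordinate, for every $e\in M$. For $\mathbf a:M\to\mathbb Z_N^k$, $[\mathbf a]\in\mathbb Z_N^\Lambda$ is defined by $[\mathbf a]_{v_i}=\mathbf a(e)_i$ for every $e=(v_1,\dots,v_k)\in M$ and $i\in[k]$, and $[\mathbf a]_v=0$ for vertices $v$ not covered by $M$. *)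

theory Defs
  imports Complex_Main "HOL-Library.FuncSet"
begin

(* Z_N is represented by the naturals below N; Z_N^I by extensional functions I <rightarrow><^sub>E {..<N}.
  A k-tuple is an extensional function {..<k} <rightarrow> vertices. *)

definition ZN_pow :: "nat \<Rightarrow> 'i set \<Rightarrow> ('i \<Rightarrow> nat) set" where
  "ZN_pow N I = I \<rightarrow>\<^sub>E {..<N}"

definition vsub :: "nat \<Rightarrow> nat \<Rightarrow> (nat \<Rightarrow> nat) \<Rightarrow> (nat \<Rightarrow> nat) \<Rightarrow> (nat \<Rightarrow> nat)" where
  "vsub N k w z = (\<lambda>i\<in>{..<k}. (w i + N - z i) mod N)"

definition k_universe :: "nat \<Rightarrow> (nat \<Rightarrow> 'v set) \<Rightarrow> nat \<Rightarrow> bool" where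
  "k_universe k U n \<longleftrightarrow> (\<forall>i<k. finite (U i) \<and> card (U i) = n)"

definition matchings :: "nat \<Rightarrow> (nat \<Rightarrow> 'v set) \<Rightarrow> nat \<Rightarrow> (nat \<Rightarrow> 'v) set set" where
  "matchings k U m = {M. M \<subseteq> Pi\<^sub>E {..<k} U \<and> finite M \<and> card M = m \<and>
      (\<forall>e\<in>M. inj_on e {..<k}) \<and>
      (\<forall>e\<in>M. \<forall>e'\<in>M. e \<noteq> e' \<longrightarrow> e ` {..<k} \<inter> e' ` {..<k} = {})}"

definition pmf_on :: "nat \<Rightarrow> nat \<Rightarrow> ((nat \<Rightarrow> nat) \<Rightarrow> real) \<Rightarrow> bool" where
  "pmf_on N k \<mu> \<longleftrightarrow> (\<forall>w\<in>ZN_pow N {..<k}. \<mu> w \<ge> 0) \<and> (\<Sum>w\<in>ZN_pow N {..<k}. \<mu> w) = 1"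

definition one_wise_independent :: "nat \<Rightarrow> nat \<Rightarrow> ((nat \<Rightarrow> nat) \<Rightarrow> real) \<Rightarrow> bool" where
  "one_wise_independent N k \<mu> \<longleftrightarrow>
     (\<forall>i<k. \<forall>t<N. (\<Sum>w\<in>{w\<in>ZN_pow N {..<k}. w i = t}. \<mu> w) = 1 / real N)"

definition chr :: "nat \<Rightarrow> 'i set \<Rightarrow> ('i \<Rightarrow> nat) \<Rightarrow> ('i \<Rightarrow> nat) \<Rightarrow> complex" where
  "chr N I t w = exp (2 * of_real pi * \<i> * of_nat (\<Sum>j\<in>I. t j * w j) / of_nat N)"

definition inner_exp :: "'a set \<Rightarrow> ('a \<Rightarrow> complex) \<Rightarrow> ('a \<Rightarrow> complex) \<Rightarrow> complex" where
  "inner_exp A g h = (\<Sum>x\<in>A. g x * cnj (h x)) / of_nat (card A)"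

definition maps :: "nat \<Rightarrow> nat \<Rightarrow> (nat \<Rightarrow> 'v) set \<Rightarrow> ((nat \<Rightarrow> 'v) \<Rightarrow> (nat \<Rightarrow> nat)) set" where
  "maps N k M = Pi\<^sub>E M (\<lambda>_. ZN_pow N {..<k})"

definition restr_tuple :: "nat \<Rightarrow> ('v \<Rightarrow> nat) \<Rightarrow> (nat \<Rightarrow> 'v) \<Rightarrow> (nat \<Rightarrow> nat)" where
  "restr_tuple k x e = (\<lambda>i\<in>{..<k}. x (e i))"

definition Rop :: "nat \<Rightarrow> nat \<Rightarrow> ((nat \<Rightarrow> nat) \<Rightarrow> real) \<Rightarrow> (nat \<Rightarrow> 'v) set
     \<Rightarrow> (((nat \<Rightarrow> 'v) \<Rightarrow> (nat \<Rightarrow> nat)) \<Rightarrow> complex) \<Rightarrow> ('v \<Rightarrow> nat) \<Rightarrow> complex" where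
  "Rop N k \<mu> M f x = (\<Sum>\<xi>\<in>maps N k M.
      of_real (\<Prod>e\<in>M. \<mu> (vsub N k (restr_tuple k x e) (\<xi> e))) * f \<xi>)"

definition psi :: "nat \<Rightarrow> nat \<Rightarrow> (nat \<Rightarrow> 'v) set \<Rightarrow> ((nat \<Rightarrow> 'v) \<Rightarrow> (nat \<Rightarrow> nat))
     \<Rightarrow> ((nat \<Rightarrow> 'v) \<Rightarrow> (nat \<Rightarrow> nat)) \<Rightarrow> complex" where
  "psi N k M a \<xi> = (\<Prod>e\<in>M. chr N {..<k} (a e) (\<xi> e))"

definition fourier :: "nat \<Rightarrow> nat \<Rightarrow> (nat \<Rightarrow> 'v) set
     \<Rightarrow> (((nat \<Rightarrow> 'v) \<Rightarrow> (nat \<Rightarrow> nat)) \<Rightarrow> complex) \<Rightarrow> ((nat \<Rightarrow> 'v) \<Rightarrow> (nat \<Rightarrow> nat)) \<Rightarrow> complex" where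
  "fourier N k M f a = inner_exp (maps N k M) f (psi N k M a)"

definition Xset :: "nat \<Rightarrow> nat \<Rightarrow> (nat \<Rightarrow> 'v) set \<Rightarrow> ((nat \<Rightarrow> 'v) \<Rightarrow> (nat \<Rightarrow> nat)) set" where
  "Xset N k M = {a\<in>maps N k M. \<forall>e\<in>M. card {i\<in>{..<k}. a e i \<noteq> 0} \<noteq> 1}"

definition bracket :: "nat \<Rightarrow> 'v set \<Rightarrow> (nat \<Rightarrow> 'v) set \<Rightarrow> ((nat \<Rightarrow> 'v) \<Rightarrow> (nat \<Rightarrow> nat)) \<Rightarrow> ('v \<Rightarrow> nat)" where
  "bracket k \<Lambda> M a = (\<lambda>v\<in>\<Lambda>. if \<exists>e\<in>M. \<exists>i<k. e i = v
       then (THE c. \<exists>e\<in>M. \<exists>i<k. e i = v \<and> a e i = c) else 0)"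

end

theory Submission
  imports Defs
begin

definition om :: "nat \<Rightarrow> nat \<Rightarrow> complex" where
  "om N n = cis (2 * pi * real n / real N)"

lemma chr_om: "chr N I t w = om N (\<Sum>j\<in>I. t j * w j)"
  unfolding chr_def om_def cis_conv_exp
  by (rule arg_cong[where f=exp]) (simp add: field_simps)

lemma om_add: "om N (a + b) = om N a * om N b"
  unfolding om_def by (simp add: cis_mult add_divide_distrib distrib_left)

lemma om_sum: "om N (\<Sum>i\<in>I. h i) = (\<Prod>i\<in>I. om N (h i))"
proof (induction I rule: infinite_finite_induct)
  case (infinite A) then show ?case by (simp add: om_def)
next
  case empty then show ?case by (simp add: om_def)
next
  case (insert x F) then show ?case by (simp add: om_add)
qed

lemma om_mult: "om N (c * t) = om N c ^ t"
  unfolding om_def by (simp add: DeMoivre mult_ac)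

lemma om_N: "N > 0 \<Longrightarrow> om N (N * q) = 1"
proof -
  assume "N > 0"
  then have "2 * pi * real (N * q) / real N = 2 * pi * real q" by simp
  then show ?thesis unfolding om_def
    by (simp add: complex_eq_iff cos_int_2pin[of "int q", simplified] sin_int_2pin[of "int q", simplified])
qed

lemma om_mod: "N > 0 \<Longrightarrow> om N (a mod N) = om N a"
proof -
  assume N: "N > 0"
  have "om N a = om N (a mod N + N * (a div N))" by simp
  also have "\<dots> = om N (a mod N) * om N (N * (a div N))" by (rule om_add)
  also have "\<dots> = om N (a mod N)" using N om_N by simp
  finally show ?thesis by simp
qed

lemma om_cong: "N > 0 \<Longrightarrow> a mod N = b mod N \<Longrightarrow> om N a = om N b"
  by (metis om_mod)

lemma norm_om [simp]: "norm (om N n) = 1"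
  by (simp add: om_def)

lemma om_ne1: assumes "0 < c" "c < N" shows "om N c \<noteq> 1"
proof
  assume "om N c = 1"
  then obtain j :: int where j: "2 * pi * real c / real N = 2 * pi * of_int j"
    by (auto simp: om_def complex_eq_iff cos_one_2pi_int)
  then have "real c = real N * of_int j" using assms by (simp add: field_simps)
  then have "int c = int N * j" by (metis of_int_eq_iff of_int_mult of_int_of_nat_eq)
  note eq = this
  show False
  proof (cases "j \<le> 0")
    case True
    then have "int N * j \<le> 0" by (simp add: mult_nonneg_nonpos)
    with eq assms show False by simp
  next
    case False
    then have "int N * 1 \<le> int N * j" by (intro mult_left_mono) auto
    with eq assms show False by simp
  qed
qed

lemma om_geom: assumes "0 < c" "c < N" shows "(\<Sum>t<N. om N (c * t)) = 0"
proof -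
  have "(\<Sum>t<N. om N (c * t)) = (\<Sum>t<N. om N c ^ t)" by (simp add: om_mult)
  also have "\<dots> = (om N c ^ N - 1) / (om N c - 1)"
    using om_ne1[OF assms] by (subst geometric_sum) auto
  also have "om N c ^ N = 1" using assms using om_N[of N c] om_mult[of N c N] by (simp add: mult.commute)
  finally show ?thesis by simp
qed


lemma split2:
  fixes F G :: "('v \<Rightarrow> 'a) \<Rightarrow> 'c::comm_semiring_1"
  assumes "V \<inter> W = {}"
  shows "(\<Sum>x\<in>PiE (V \<union> W) A. F (restrict x V) * G (restrict x W))
       = (\<Sum>y\<in>PiE V A. F y) * (\<Sum>z\<in>PiE W A. G z)"
proof -
  have "(\<Sum>y\<in>PiE V A. F y) * (\<Sum>z\<in>PiE W A. G z) = (\<Sum>p\<in>PiE V A \<times> PiE W A. F (fst p) * G (snd p))"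
    by (simp add: sum_product sum.cartesian_product split_beta)
  also have "\<dots> = (\<Sum>x\<in>PiE (V \<union> W) A. F (restrict x V) * G (restrict x W))"
  proof (rule sum.reindex_bij_witness[where i="\<lambda>x. (restrict x V, restrict x W)"
        and j="\<lambda>p v. if v \<in> V then fst p v else snd p v"])
    fix p assume p: "p \<in> PiE V A \<times> PiE W A"
    show "(restrict (\<lambda>v. if v \<in> V then fst p v else snd p v) V,
           restrict (\<lambda>v. if v \<in> V then fst p v else snd p v) W) = p"
      using p assms by (cases p) (auto simp: restrict_def PiE_def extensional_def fun_eq_iff)
    show "(\<lambda>v. if v \<in> V then fst p v else snd p v) \<in> PiE (V \<union> W) A"
      using p by (cases p) (auto simp: PiE_def extensional_def)
  next
    fix x assume x: "x \<in> PiE (V \<union> W) A"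
    show "(\<lambda>v. if v \<in> V then fst (restrict x V, restrict x W) v else snd (restrict x V, restrict x W) v) = x"
      using x by (auto simp: PiE_def extensional_def fun_eq_iff)
    show "(restrict x V, restrict x W) \<in> PiE V A \<times> PiE W A" using x by auto
  next
    fix p assume p: "p \<in> PiE V A \<times> PiE W A"
    have "restrict (\<lambda>v. if v \<in> V then fst p v else snd p v) V = fst p"
      "restrict (\<lambda>v. if v \<in> V then fst p v else snd p v) W = snd p"
      using p assms by (cases p; auto simp: restrict_def PiE_def extensional_def fun_eq_iff)+
    then show "F (restrict (\<lambda>v. if v \<in> V then fst p v else snd p v) V) * G (restrict (\<lambda>v. if v \<in> V then fst p v else snd p v) W) = F (fst p) * G (snd p)" by simp
  qed
  finally show ?thesis by simp
qed

lemma blocks: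
  fixes g :: "'j \<Rightarrow> ('v \<Rightarrow> 'a) \<Rightarrow> 'c::comm_semiring_1"
  assumes "finite J" "\<forall>i\<in>J. \<forall>j\<in>J. i \<noteq> j \<longrightarrow> B i \<inter> B j = {}"
  shows "(\<Sum>x\<in>PiE (\<Union>j\<in>J. B j) A. \<Prod>j\<in>J. g j (restrict x (B j)))
       = (\<Prod>j\<in>J. \<Sum>y\<in>PiE (B j) A. g j y)"
  using assms
proof (induction J rule: finite_induct)
  case empty
  then show ?case by simp
next
  case (insert j J)
  define U where "U = (\<Union>i\<in>J. B i)"
  have dj: "\<forall>i\<in>J. \<forall>j\<in>J. i \<noteq> j \<longrightarrow> B i \<inter> B j = {}" using insert.prems by auto
  have disj: "B j \<inter> U = {}" using insert.prems insert.hyps(2) unfolding U_def by (metis (no_types, lifting) UN_E disjoint_iff insertCI)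
  have "(\<Sum>x\<in>PiE (\<Union>i\<in>insert j J. B i) A. \<Prod>i\<in>insert j J. g i (restrict x (B i)))
      = (\<Sum>x\<in>PiE (B j \<union> U) A. g j (restrict x (B j)) * (\<lambda>z. \<Prod>i\<in>J. g i (restrict z (B i))) (restrict x U))"
  proof (rule sum.cong)
    show "PiE (\<Union>i\<in>insert j J. B i) A = PiE (B j \<union> U) A" by (simp add: U_def)
  next
    fix x
    have "(\<Prod>i\<in>J. g i (restrict x (B i))) = (\<Prod>i\<in>J. g i (restrict (restrict x U) (B i)))"
    proof (rule prod.cong[OF refl])
      fix i assume "i \<in> J"
      then have "restrict x (B i) = restrict (restrict x U) (B i)"
        by (auto simp: U_def restrict_def fun_eq_iff)
      then show "g i (restrict x (B i)) = g i (restrict (restrict x U) (B i))" by simp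
    qed
    then show "(\<Prod>i\<in>insert j J. g i (restrict x (B i))) = g j (restrict x (B j)) * (\<lambda>z. \<Prod>i\<in>J. g i (restrict z (B i))) (restrict x U)"
      using insert.hyps by simp
  qed
  also have "\<dots> = (\<Sum>y\<in>PiE (B j) A. g j y) * (\<Sum>z\<in>PiE U A. \<Prod>i\<in>J. g i (restrict z (B i)))"
    by (rule split2[OF disj])
  also have "\<dots> = (\<Prod>i\<in>insert j J. \<Sum>y\<in>PiE (B i) A. g i y)"
    using insert.IH[OF dj] insert.hyps by (simp add: U_def restrict_def)
  finally show ?case .
qed


definition vadd :: "nat \<Rightarrow> nat \<Rightarrow> (nat \<Rightarrow> nat) \<Rightarrow> (nat \<Rightarrow> nat) \<Rightarrow> (nat \<Rightarrow> nat)" where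
  "vadd N k u z = (\<lambda>i\<in>{..<k}. (u i + z i) mod N)"

lemma tuple_reparam:
  assumes "inj_on e {..<k}"
  shows "(\<Sum>y\<in>PiE (e ` {..<k}) (\<lambda>_. {..<N}). g (restr_tuple k y e)) = (\<Sum>w\<in>ZN_pow N {..<k}. g w)"
proof (rule sum.reindex_bij_witness[where i="\<lambda>w. (\<lambda>v\<in>e ` {..<k}. w (the_inv_into {..<k} e v))"
      and j="\<lambda>y. restr_tuple k y e"])
  fix y assume y: "y \<in> PiE (e ` {..<k}) (\<lambda>_. {..<N})"
  show "(\<lambda>v\<in>e ` {..<k}. restr_tuple k y e (the_inv_into {..<k} e v)) = y"
  proof (rule ext)
    fix v show "(\<lambda>v\<in>e ` {..<k}. restr_tuple k y e (the_inv_into {..<k} e v)) v = y v"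
    proof (cases "v \<in> e ` {..<k}")
      case True
      then obtain i where i: "i < k" "v = e i" by auto
      then show ?thesis using the_inv_into_f_f[OF assms, of i] by (simp add: restr_tuple_def)
    next
      case False
      then show ?thesis using PiE_arb[OF y False] by simp
    qed
  qed
  show "restr_tuple k y e \<in> ZN_pow N {..<k}" using y by (auto simp: restr_tuple_def ZN_pow_def)
next
  fix w assume w: "w \<in> ZN_pow N {..<k}"
  show "restr_tuple k (\<lambda>v\<in>e ` {..<k}. w (the_inv_into {..<k} e v)) e = w"
  proof
    fix i
    show "restr_tuple k (\<lambda>v\<in>e ` {..<k}. w (the_inv_into {..<k} e v)) e i = w i"
    proof (cases "i < k")
      case True
      then show ?thesis using the_inv_into_f_f[OF assms, of i] by (simp add: restr_tuple_def)
    next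
      case False
      have "w i = undefined" using w False by (auto simp: ZN_pow_def PiE_def extensional_def)
      then show ?thesis using False by (simp add: restr_tuple_def)
    qed
  qed
  show "(\<lambda>v\<in>e ` {..<k}. w (the_inv_into {..<k} e v)) \<in> PiE (e ` {..<k}) (\<lambda>_. {..<N})"
  proof (rule PiE_I)
    fix v assume "v \<in> e ` {..<k}"
    then obtain i where i: "i < k" "v = e i" by auto
    have "w i < N" using w i by (auto simp: ZN_pow_def)
    then show "(\<lambda>v\<in>e ` {..<k}. w (the_inv_into {..<k} e v)) v \<in> {..<N}"
      using i the_inv_into_f_f[OF assms, of i] by simp
  qed simp
qed simp

lemma chr_vadd:
  assumes "N > 0"
  shows "chr N {..<k} t (vadd N k u z) = chr N {..<k} t u * chr N {..<k} t z"
proof -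
  have "(\<Sum>j<k. t j * vadd N k u z j) mod N = (\<Sum>j<k. t j * u j + t j * z j) mod N"
  proof -
    have "(\<Sum>j<k. t j * vadd N k u z j) mod N = (\<Sum>j<k. t j * vadd N k u z j mod N) mod N"
      by (rule mod_sum_eq[symmetric])
    also have "\<dots> = (\<Sum>j<k. (t j * u j + t j * z j) mod N) mod N"
      by (rule arg_cong[where f="\<lambda>x. x mod N"], rule sum.cong)
         (auto simp: vadd_def mod_mult_right_eq distrib_left)
    also have "\<dots> = (\<Sum>j<k. t j * u j + t j * z j) mod N" by (rule mod_sum_eq)
    finally show ?thesis .
  qed
  then have "om N (\<Sum>j<k. t j * vadd N k u z j) = om N (\<Sum>j<k. t j * u j + t j * z j)"
    by (rule om_cong[OF assms])
  then show ?thesis unfolding chr_om by (simp add: sum.distrib om_add)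
qed

lemma vsub_vadd: "N > 0 \<Longrightarrow> u \<in> ZN_pow N {..<k} \<Longrightarrow> z \<in> ZN_pow N {..<k} \<Longrightarrow> vsub N k (vadd N k u z) z = u"
proof -
  assume N: "N > 0" and u: "u \<in> ZN_pow N {..<k}" and z: "z \<in> ZN_pow N {..<k}"
  have "((u i + z i) mod N + N - z i) mod N = u i" if "i < k" for i
  proof -
    have zi: "z i < N" and ui: "u i < N" using that u z by (auto simp: ZN_pow_def)
    have "((u i + z i) mod N + N - z i) mod N = ((u i + z i) mod N + (N - z i)) mod N" using zi by simp
    also have "\<dots> = (u i + z i + (N - z i)) mod N" by (simp add: mod_add_left_eq)
    also have "u i + z i + (N - z i) = u i + N" using zi by simp
    finally show ?thesis using ui by simp
  qed
  then show ?thesis using u by (auto simp: vsub_def vadd_def ZN_pow_def fun_eq_iff PiE_def extensional_def)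
qed

lemma vadd_vsub: "N > 0 \<Longrightarrow> w \<in> ZN_pow N {..<k} \<Longrightarrow> z \<in> ZN_pow N {..<k} \<Longrightarrow> vadd N k (vsub N k w z) z = w"
proof -
  assume N: "N > 0" and u: "w \<in> ZN_pow N {..<k}" and z: "z \<in> ZN_pow N {..<k}"
  have "((w i + N - z i) mod N + z i) mod N = w i" if "i < k" for i
  proof -
    have zi: "z i < N" and ui: "w i < N" using that u z by (auto simp: ZN_pow_def)
    have "((w i + N - z i) mod N + z i) mod N = (w i + N - z i + z i) mod N" by (simp add: mod_add_left_eq)
    also have "w i + N - z i + z i = w i + N" using zi by simp
    finally show ?thesis using ui by simp
  qed
  then show ?thesis using u by (auto simp: vsub_def vadd_def ZN_pow_def fun_eq_iff PiE_def extensional_def)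
qed

lemma shift_sum:
  assumes N: "N > 0" and z: "z \<in> ZN_pow N {..<k}"
  shows "(\<Sum>w\<in>ZN_pow N {..<k}. of_real (\<mu> (vsub N k w z)) * cnj (chr N {..<k} t w))
       = cnj (chr N {..<k} t z) * (\<Sum>u\<in>ZN_pow N {..<k}. of_real (\<mu> u) * cnj (chr N {..<k} t u))"
  unfolding sum_distrib_left
proof (rule sum.reindex_bij_witness[where j="\<lambda>w. vsub N k w z" and i="\<lambda>u. vadd N k u z"])
  fix u assume u: "u \<in> ZN_pow N {..<k}"
  show "vsub N k (vadd N k u z) z = u" by (rule vsub_vadd[OF N u z])
  show "vadd N k u z \<in> ZN_pow N {..<k}" using N by (auto simp: vadd_def ZN_pow_def)
next
  fix w assume w: "w \<in> ZN_pow N {..<k}"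
  show "vadd N k (vsub N k w z) z = w" by (rule vadd_vsub[OF N w z])
  have vz: "vsub N k w z \<in> ZN_pow N {..<k}" using N by (auto simp: vsub_def ZN_pow_def)
  then show "vsub N k w z \<in> ZN_pow N {..<k}" .
  have "chr N {..<k} t (vadd N k (vsub N k w z) z) = chr N {..<k} t (vsub N k w z) * chr N {..<k} t z"
    by (rule chr_vadd[OF N])
  then have "chr N {..<k} t w = chr N {..<k} t (vsub N k w z) * chr N {..<k} t z"
    by (simp add: vadd_vsub[OF N w z])
  then show "cnj (chr N {..<k} t z) * (of_real (\<mu> (vsub N k w z)) * cnj (chr N {..<k} t (vsub N k w z))) =
        of_real (\<mu> (vsub N k w z)) * cnj (chr N {..<k} t w)"
    by simp
qed



definition muhat :: "nat \<Rightarrow> nat \<Rightarrow> ((nat \<Rightarrow> nat) \<Rightarrow> real) \<Rightarrow> (nat \<Rightarrow> nat) \<Rightarrow> complex" where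
  "muhat N k \<mu> t = (\<Sum>u\<in>ZN_pow N {..<k}. of_real (\<mu> u) * cnj (chr N {..<k} t u))"

lemma finite_ZN [simp]: "finite I \<Longrightarrow> finite (ZN_pow N I)"
  unfolding ZN_pow_def by (rule finite_PiE) auto

lemma norm_chr [simp]: "norm (chr N I t w) = 1"
  by (simp add: chr_om)

lemma muhat_bound:
  assumes "pmf_on N k \<mu>"
  shows "norm (muhat N k \<mu> t) \<le> 1"
proof -
  have "norm (muhat N k \<mu> t) \<le> (\<Sum>u\<in>ZN_pow N {..<k}. norm (of_real (\<mu> u) * cnj (chr N {..<k} t u)))"
    unfolding muhat_def by (rule norm_sum)
  also have "\<dots> = (\<Sum>u\<in>ZN_pow N {..<k}. \<mu> u)"
    using assms by (intro sum.cong refl) (auto simp: pmf_on_def norm_mult)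
  also have "\<dots> = 1" using assms by (simp add: pmf_on_def)
  finally show ?thesis .
qed

lemma muhat_zero:
  assumes owi: "one_wise_independent N k \<mu>" and N: "N > 0"
    and t: "t \<in> ZN_pow N {..<k}" and card1: "card {i\<in>{..<k}. t i \<noteq> 0} = 1"
  shows "muhat N k \<mu> t = 0"
proof -
  obtain i0 where i0: "{i\<in>{..<k}. t i \<noteq> 0} = {i0}" using card1 by (rule card_1_singletonE)
  have i0k: "i0 < k" and ti0: "t i0 \<noteq> 0" using i0 by auto
  have tlt: "t i0 < N" using t i0k by (auto simp: ZN_pow_def)
  have oth: "t j = 0" if "j < k" "j \<noteq> i0" for j using i0 that by blast
  have sumeq: "(\<Sum>j<k. t j * u j) = t i0 * u i0" for u
  proof -
    have "(\<Sum>j<k. t j * u j) = t i0 * u i0 + (\<Sum>j\<in>{..<k} - {i0}. t j * u j)"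
      using i0k by (simp add: sum.remove)
    also have "(\<Sum>j\<in>{..<k} - {i0}. t j * u j) = 0" using oth by (intro sum.neutral) auto
    finally show ?thesis by simp
  qed
  have "muhat N k \<mu> t = (\<Sum>u\<in>ZN_pow N {..<k}. of_real (\<mu> u) * cnj (om N (t i0 * u i0)))"
    unfolding muhat_def chr_om sumeq ..
  also have "\<dots> = (\<Sum>s<N. \<Sum>u\<in>{u\<in>ZN_pow N {..<k}. u i0 = s}. of_real (\<mu> u) * cnj (om N (t i0 * u i0)))"
    by (rule sum.group[symmetric]) (use i0k in \<open>auto simp: ZN_pow_def intro!: finite_PiE\<close>)
  also have "\<dots> = (\<Sum>s<N. of_real (\<Sum>u\<in>{u\<in>ZN_pow N {..<k}. u i0 = s}. \<mu> u) * cnj (om N (t i0 * s)))"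
    by (intro sum.cong refl) (auto simp: sum_distrib_right)
  also have "\<dots> = (\<Sum>s<N. of_real (1 / real N) * cnj (om N (t i0 * s)))"
    using owi i0k by (intro sum.cong refl) (simp add: one_wise_independent_def)
  also have "\<dots> = of_real (1 / real N) * cnj (\<Sum>s<N. om N (t i0 * s))"
    by (simp add: sum_distrib_left)
  also have "(\<Sum>s<N. om N (t i0 * s)) = 0" using ti0 tlt by (intro om_geom) auto
  finally show ?thesis by simp
qed



lemma main_S:
  fixes \<Lambda> :: "'v set" and M :: "(nat \<Rightarrow> 'v) set"
  assumes N: "N > 0" and fin: "finite \<Lambda>" and finM: "finite M"
    and inj: "\<And>e. e \<in> M \<Longrightarrow> inj_on e {..<k}"
    and disj: "\<And>e e'. e \<in> M \<Longrightarrow> e' \<in> M \<Longrightarrow> e \<noteq> e' \<Longrightarrow> e ` {..<k} \<inter> e' ` {..<k} = {}"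
    and sub: "\<And>e i. e \<in> M \<Longrightarrow> i < k \<Longrightarrow> e i \<in> \<Lambda>"
    and \<xi>: "\<xi> \<in> maps N k M"
  defines "V \<equiv> (\<Union>e\<in>M. e ` {..<k})"
  defines "W \<equiv> \<Lambda> - V"
  shows "(\<Sum>x\<in>ZN_pow N \<Lambda>. of_real (\<Prod>e\<in>M. \<mu> (vsub N k (restr_tuple k x e) (\<xi> e))) * cnj (chr N \<Lambda> b x))
       = (\<Prod>e\<in>M. cnj (chr N {..<k} (restr_tuple k b e) (\<xi> e)) * muhat N k \<mu> (restr_tuple k b e))
         * (\<Prod>v\<in>W. \<Sum>t<N. cnj (om N (b v * t)))"
proof -
  define A :: "'v \<Rightarrow> nat set" where "A = (\<lambda>_. {..<N})"
  define g where "g e w = (of_real (\<mu> (vsub N k w (\<xi> e))) * cnj (chr N {..<k} (restr_tuple k b e) w) :: complex)" for e w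
  define h where "h v t = cnj (om N (b v * t))" for v t
  have VL: "V \<subseteq> \<Lambda>" using sub by (auto simp: V_def)
  have LVW: "\<Lambda> = V \<union> W" and VW: "V \<inter> W = {}" using VL by (auto simp: W_def)
  have finV: "finite V" and finW: "finite W" using VL fin finite_subset by (auto simp: W_def)
  have chr_split: "cnj (chr N \<Lambda> b x) = (\<Prod>e\<in>M. cnj (chr N {..<k} (restr_tuple k b e) (restr_tuple k x e)))
        * (\<Prod>v\<in>W. h v (x v))" for x
  proof -
    have "(\<Sum>v\<in>\<Lambda>. b v * x v) = (\<Sum>v\<in>V. b v * x v) + (\<Sum>v\<in>W. b v * x v)"
      unfolding LVW using finV finW VW by (rule sum.union_disjoint)
    moreover have "(\<Sum>v\<in>V. b v * x v) = (\<Sum>e\<in>M. \<Sum>v\<in>e ` {..<k}. b v * x v)"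
      unfolding V_def using finM disj by (intro sum.UNION_disjoint) auto
    moreover have "(\<Sum>v\<in>e ` {..<k}. b v * x v) = (\<Sum>i<k. restr_tuple k b e i * restr_tuple k x e i)"
      if "e \<in> M" for e
      using inj[OF that] by (simp add: sum.reindex restr_tuple_def)
    ultimately have "(\<Sum>v\<in>\<Lambda>. b v * x v) = (\<Sum>e\<in>M. \<Sum>i<k. restr_tuple k b e i * restr_tuple k x e i) + (\<Sum>v\<in>W. b v * x v)"
      by simp
    then show ?thesis unfolding chr_om h_def by (simp add: om_add om_sum)
  qed
  have step1: "of_real (\<Prod>e\<in>M. \<mu> (vsub N k (restr_tuple k x e) (\<xi> e))) * cnj (chr N \<Lambda> b x)
      = (\<lambda>y. \<Prod>e\<in>M. g e (restr_tuple k (restrict y (e ` {..<k})) e)) (restrict x V) *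
        (\<lambda>z. \<Prod>v\<in>W. h v (z v)) (restrict x W)" for x
  proof -
    have r: "restr_tuple k (restrict (restrict x V) (e ` {..<k})) e = restr_tuple k x e" if "e \<in> M" for e
      using that by (auto simp: restr_tuple_def V_def fun_eq_iff)
    have P1: "(\<Prod>e\<in>M. g e (restr_tuple k (restrict (restrict x V) (e ` {..<k})) e)) = (\<Prod>e\<in>M. g e (restr_tuple k x e))"
      by (rule prod.cong[OF refl]) (simp only: r)
    have P2: "(\<Prod>v\<in>W. h v (restrict x W v)) = (\<Prod>v\<in>W. h v (x v))" by simp
    have "of_real (\<Prod>e\<in>M. \<mu> (vsub N k (restr_tuple k x e) (\<xi> e))) * cnj (chr N \<Lambda> b x)
       = (\<Prod>e\<in>M. g e (restr_tuple k x e)) * (\<Prod>v\<in>W. h v (x v))"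
      unfolding chr_split g_def by (simp add: prod.distrib of_real_prod mult_ac)
    then show ?thesis by (simp only: P1 P2)
  qed
  have "(\<Sum>x\<in>ZN_pow N \<Lambda>. of_real (\<Prod>e\<in>M. \<mu> (vsub N k (restr_tuple k x e) (\<xi> e))) * cnj (chr N \<Lambda> b x))
     = (\<Sum>x\<in>PiE (V \<union> W) A. (\<lambda>y. \<Prod>e\<in>M. g e (restr_tuple k (restrict y (e ` {..<k})) e)) (restrict x V) *
        (\<lambda>z. \<Prod>v\<in>W. h v (z v)) (restrict x W))"
    unfolding step1 ZN_pow_def A_def LVW[symmetric] ..
  also have "\<dots> = (\<Sum>y\<in>PiE V A. \<Prod>e\<in>M. g e (restr_tuple k (restrict y (e ` {..<k})) e)) *
      (\<Sum>z\<in>PiE W A. \<Prod>v\<in>W. h v (z v))"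
    by (rule split2[OF VW])
  also have "(\<Sum>y\<in>PiE V A. \<Prod>e\<in>M. g e (restr_tuple k (restrict y (e ` {..<k})) e))
      = (\<Prod>e\<in>M. \<Sum>y\<in>PiE (e ` {..<k}) A. g e (restr_tuple k y e))"
    unfolding V_def using finM disj
    by (intro blocks[where g="\<lambda>e y. g e (restr_tuple k y e)", simplified]) auto
  also have "\<dots> = (\<Prod>e\<in>M. cnj (chr N {..<k} (restr_tuple k b e) (\<xi> e)) * muhat N k \<mu> (restr_tuple k b e))"
  proof (rule prod.cong[OF refl])
    fix e assume e: "e \<in> M"
    have xe: "\<xi> e \<in> ZN_pow N {..<k}" using \<xi> e by (auto simp: maps_def)
    have "(\<Sum>y\<in>PiE (e ` {..<k}) A. g e (restr_tuple k y e)) = (\<Sum>w\<in>ZN_pow N {..<k}. g e w)"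
      unfolding A_def by (rule tuple_reparam[OF inj[OF e]])
    also have "\<dots> = cnj (chr N {..<k} (restr_tuple k b e) (\<xi> e)) * muhat N k \<mu> (restr_tuple k b e)"
      unfolding g_def muhat_def by (rule shift_sum[OF N xe])
    finally show "(\<Sum>y\<in>PiE (e ` {..<k}) A. g e (restr_tuple k y e)) = cnj (chr N {..<k} (restr_tuple k b e) (\<xi> e)) * muhat N k \<mu> (restr_tuple k b e)" .
  qed
  also have "(\<Sum>z\<in>PiE W A. \<Prod>v\<in>W. h v (z v)) = (\<Prod>v\<in>W. \<Sum>t<N. cnj (om N (b v * t)))"
    unfolding h_def A_def using finW by (subst prod_sum_PiE) auto
  finally show ?thesis .
qed


theorem lemma6p6:
  fixes N k m n :: nat and U :: "nat \<Rightarrow> 'v set" and \<Lambda> :: "'v set"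
    and \<mu> :: "(nat \<Rightarrow> nat) \<Rightarrow> real" and M :: "(nat \<Rightarrow> 'v) set"
    and f :: "((nat \<Rightarrow> 'v) \<Rightarrow> (nat \<Rightarrow> nat)) \<Rightarrow> complex" and b :: "'v \<Rightarrow> nat"
  assumes "N \<ge> 2"
    and "finite \<Lambda>"
    and "k_universe k U n"
    and "(\<Union>i<k. U i) \<subseteq> \<Lambda>"
    and "pmf_on N k \<mu>"
    and "one_wise_independent N k \<mu>"
    and "M \<in> matchings k U m"
    and "m \<le> n"
    and "b \<in> ZN_pow N \<Lambda>"
  shows "(\<forall>a\<in>Xset N k M. b = bracket k \<Lambda> M a \<longrightarrow>
            cmod (inner_exp (ZN_pow N \<Lambda>) (Rop N k \<mu> M f) (chr N \<Lambda> b)) \<le> cmod (fourier N k M f a))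
       \<and> ((\<forall>a\<in>Xset N k M. b \<noteq> bracket k \<Lambda> M a) \<longrightarrow>
            inner_exp (ZN_pow N \<Lambda>) (Rop N k \<mu> M f) (chr N \<Lambda> b) = 0)"
proof -
  have N: "N > 0" using assms(1) by simp
  have fin: "finite \<Lambda>" by fact
  have Msub: "M \<subseteq> PiE {..<k} U" and finM: "finite M" and cardM: "card M = m"
    and inj: "\<And>e. e \<in> M \<Longrightarrow> inj_on e {..<k}"
    and disj: "\<And>e e'. e \<in> M \<Longrightarrow> e' \<in> M \<Longrightarrow> e \<noteq> e' \<Longrightarrow> e ` {..<k} \<inter> e' ` {..<k} = {}"
    using assms(7) by (auto simp: matchings_def)
  have sub: "e i \<in> \<Lambda>" if "e \<in> M" "i < k" for e i
    using Msub that assms(4) by (auto simp: PiE_def Pi_def)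
  define V where "V = (\<Union>e\<in>M. e ` {..<k})"
  define W where "W = \<Lambda> - V"
  have VL: "V \<subseteq> \<Lambda>" using sub by (auto simp: V_def)
  have LVW: "\<Lambda> = V \<union> W" and VW: "V \<inter> W = {}" using VL by (auto simp: W_def)
  have finV: "finite V" and finW: "finite W" using VL fin finite_subset by (auto simp: W_def)
  have b_lt: "b v < N" if "v \<in> \<Lambda>" for v using assms(9) that by (auto simp: ZN_pow_def)
  have b_out: "b v = undefined" if "v \<notin> \<Lambda>" for v using assms(9) that by (auto simp: ZN_pow_def PiE_def extensional_def)
  define \<beta> where "\<beta> e = restr_tuple k b e" for e
  define P where "P = (\<Prod>e\<in>M. muhat N k \<mu> (\<beta> e))"
  define Wf where "Wf = (\<Prod>v\<in>W. \<Sum>t<N. cnj (om N (b v * t)))"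
  define \<Phi> where "\<Phi> = ZN_pow N \<Lambda>"
  have S: "(\<Sum>x\<in>\<Phi>. of_real (\<Prod>e\<in>M. \<mu> (vsub N k (restr_tuple k x e) (\<xi> e))) * cnj (chr N \<Lambda> b x))
      = cnj (psi N k M \<beta> \<xi>) * P * Wf" if \<xi>: "\<xi> \<in> maps N k M" for \<xi>
  proof -
    have "(\<Sum>x\<in>\<Phi>. of_real (\<Prod>e\<in>M. \<mu> (vsub N k (restr_tuple k x e) (\<xi> e))) * cnj (chr N \<Lambda> b x))
      = (\<Prod>e\<in>M. cnj (chr N {..<k} (restr_tuple k b e) (\<xi> e)) * muhat N k \<mu> (restr_tuple k b e))
         * (\<Prod>v\<in>W. \<Sum>t<N. cnj (om N (b v * t)))"
      unfolding \<Phi>_def W_def V_def using N fin finM inj disj sub \<xi> by (rule main_S)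
    then show ?thesis by (simp add: P_def Wf_def psi_def \<beta>_def prod.distrib)
  qed
  have total: "(\<Sum>x\<in>\<Phi>. Rop N k \<mu> M f x * cnj (chr N \<Lambda> b x))
      = P * Wf * (\<Sum>\<xi>\<in>maps N k M. f \<xi> * cnj (psi N k M \<beta> \<xi>))"
  proof -
    have "(\<Sum>x\<in>\<Phi>. Rop N k \<mu> M f x * cnj (chr N \<Lambda> b x))
       = (\<Sum>x\<in>\<Phi>. \<Sum>\<xi>\<in>maps N k M. f \<xi> * (of_real (\<Prod>e\<in>M. \<mu> (vsub N k (restr_tuple k x e) (\<xi> e))) * cnj (chr N \<Lambda> b x)))"
      unfolding Rop_def sum_distrib_right by (simp add: mult_ac)
    also have "\<dots> = (\<Sum>\<xi>\<in>maps N k M. \<Sum>x\<in>\<Phi>. f \<xi> * (of_real (\<Prod>e\<in>M. \<mu> (vsub N k (restr_tuple k x e) (\<xi> e))) * cnj (chr N \<Lambda> b x)))"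
      by (rule sum.swap)
    also have "\<dots> = (\<Sum>\<xi>\<in>maps N k M. f \<xi> * (cnj (psi N k M \<beta> \<xi>) * P * Wf))"
    proof (rule sum.cong[OF refl])
      fix \<xi> assume \<xi>: "\<xi> \<in> maps N k M"
      have "(\<Sum>x\<in>\<Phi>. f \<xi> * (of_real (\<Prod>e\<in>M. \<mu> (vsub N k (restr_tuple k x e) (\<xi> e))) * cnj (chr N \<Lambda> b x)))
          = f \<xi> * (\<Sum>x\<in>\<Phi>. of_real (\<Prod>e\<in>M. \<mu> (vsub N k (restr_tuple k x e) (\<xi> e))) * cnj (chr N \<Lambda> b x))"
        by (rule sum_distrib_left[symmetric])
      also have "\<dots> = f \<xi> * (cnj (psi N k M \<beta> \<xi>) * P * Wf)" by (simp only: S[OF \<xi>])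
      finally show "(\<Sum>x\<in>\<Phi>. f \<xi> * (of_real (\<Prod>e\<in>M. \<mu> (vsub N k (restr_tuple k x e) (\<xi> e))) * cnj (chr N \<Lambda> b x)))
          = f \<xi> * (cnj (psi N k M \<beta> \<xi>) * P * Wf)" .
    qed
    also have "\<dots> = P * Wf * (\<Sum>\<xi>\<in>maps N k M. f \<xi> * cnj (psi N k M \<beta> \<xi>))"
      by (simp add: sum_distrib_left mult_ac)
    finally show ?thesis .
  qed
  have uniq: "e' = e \<and> i' = i" if "e \<in> M" "e' \<in> M" "i < k" "i' < k" "e' i' = e i" for e e' i i'
  proof -
    have "e' = e"
    proof (rule ccontr)
      assume "e' \<noteq> e"
      then have "e' ` {..<k} \<inter> e ` {..<k} = {}" using disj that by blast
      then show False using that by blast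
    qed
    moreover have "i' = i" using inj[OF that(1)] that \<open>e' = e\<close> by (auto simp: inj_on_def)
    ultimately show ?thesis by simp
  qed
  have bracket_at: "bracket k \<Lambda> M a (e i) = a e i" if "e \<in> M" "i < k" for a e i
  proof -
    have "(THE c. \<exists>e'\<in>M. \<exists>i'<k. e' i' = e i \<and> a e' i' = c) = a e i"
    proof (rule the_equality)
      show "\<exists>e'\<in>M. \<exists>i'<k. e' i' = e i \<and> a e' i' = a e i" using that by blast
    next
      fix c assume "\<exists>e'\<in>M. \<exists>i'<k. e' i' = e i \<and> a e' i' = c"
      then obtain e' i' where "e' \<in> M" "i' < k" "e' i' = e i" "a e' i' = c" by blast
      then show "c = a e i" using uniq[OF that(1) \<open>e' \<in> M\<close> that(2)] by auto
    qed
    then show ?thesis using that sub[OF that] by (auto simp: bracket_def)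
  qed
  have bracket_W: "bracket k \<Lambda> M a v = 0" if "v \<in> W" for a v
    using that by (auto simp: bracket_def W_def V_def)
  have card\<Phi>: "card \<Phi> = N ^ card \<Lambda>"
    by (simp add: \<Phi>_def ZN_pow_def card_PiE fin)
  have cardV: "card V = m * k"
  proof -
    have "card V = (\<Sum>e\<in>M. card (e ` {..<k}))"
      unfolding V_def using finM disj by (intro card_UN_disjoint) auto
    also have "\<dots> = (\<Sum>e\<in>M. k)" using inj by (intro sum.cong refl) (simp add: card_image)
    finally show ?thesis using cardM by simp
  qed
  have cardL: "card \<Lambda> = card V + card W" unfolding LVW using finV finW VW by (rule card_Un_disjoint)
  have cardmaps: "card (maps N k M) = N ^ (m * k)"
    using finM cardM by (simp add: maps_def ZN_pow_def card_PiE power_mult[symmetric] mult.commute)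
  show ?thesis
  proof (intro conjI ballI impI)
    fix a assume a: "a \<in> Xset N k M" and ba: "b = bracket k \<Lambda> M a"
    have amaps: "a \<in> maps N k M" using a by (simp add: Xset_def)
    have bW: "b v = 0" if "v \<in> W" for v using bracket_W[OF that] ba by simp
    have \<beta>a: "\<beta> e = a e" if "e \<in> M" for e
    proof
      fix i show "\<beta> e i = a e i"
      proof (cases "i < k")
        case True then show ?thesis using bracket_at[OF that True] ba by (simp add: \<beta>_def restr_tuple_def)
      next
        case False
        have "a e \<in> ZN_pow N {..<k}" using amaps that by (auto simp: maps_def)
        then have "a e i = undefined" using False by (auto simp: ZN_pow_def PiE_def extensional_def)
        then show ?thesis using False by (simp add: \<beta>_def restr_tuple_def)
      qed
    qed
    have Wf_eq: "Wf = of_nat N ^ card W"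
      unfolding Wf_def using bW by (simp add: om_def)
    have psi_eq: "psi N k M \<beta> \<xi> = psi N k M a \<xi>" for \<xi>
      unfolding psi_def using \<beta>a by (intro prod.cong refl) simp
    have "(\<Sum>\<xi>\<in>maps N k M. f \<xi> * cnj (psi N k M \<beta> \<xi>)) = fourier N k M f a * of_nat (card (maps N k M))"
      using cardmaps N by (simp add: psi_eq fourier_def inner_exp_def)
    then have "inner_exp \<Phi> (Rop N k \<mu> M f) (chr N \<Lambda> b)
        = P * (of_nat N ^ card W * of_nat (N ^ (m * k)) / of_nat (N ^ card \<Lambda>)) * fourier N k M f a"
      unfolding inner_exp_def total card\<Phi> Wf_eq cardmaps by (simp add: mult_ac)
    also have "of_nat N ^ card W * of_nat (N ^ (m * k)) / of_nat (N ^ card \<Lambda>) = (1::complex)"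
      using N by (simp add: cardL cardV power_add mult_ac)
    finally have eq: "inner_exp \<Phi> (Rop N k \<mu> M f) (chr N \<Lambda> b) = P * fourier N k M f a" by simp
    have "norm P \<le> 1"
      unfolding P_def prod_norm[symmetric] using muhat_bound[OF assms(5)] by (intro prod_le_1) auto
    then have "norm P * norm (fourier N k M f a) \<le> 1 * norm (fourier N k M f a)"
      by (intro mult_right_mono) auto
    then show "cmod (inner_exp (ZN_pow N \<Lambda>) (Rop N k \<mu> M f) (chr N \<Lambda> b)) \<le> cmod (fourier N k M f a)"
      using eq by (simp add: \<Phi>_def norm_mult)
  next
    assume none: "\<forall>a\<in>Xset N k M. b \<noteq> bracket k \<Lambda> M a"
    have "P * Wf = 0"
    proof (cases "\<exists>v\<in>W. b v \<noteq> 0")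
      case True
      then obtain v where v: "v \<in> W" "b v \<noteq> 0" by blast
      have "b v < N" using v b_lt by (auto simp: W_def)
      then have "(\<Sum>t<N. om N (b v * t)) = 0" using v by (intro om_geom) auto
      then have "(\<Sum>t<N. cnj (om N (b v * t))) = 0"
        by (metis cnj_sum complex_cnj_zero)
      then have "Wf = 0" unfolding Wf_def using finW v by (auto intro: prod_zero)
      then show ?thesis by simp
    next
      case False
      then have bW: "b v = 0" if "v \<in> W" for v using that by blast
      define a where "a = (\<lambda>e\<in>M. \<beta> e)"
      have amaps: "a \<in> maps N k M"
        using b_lt sub by (auto simp: a_def maps_def ZN_pow_def \<beta>_def restr_tuple_def)
      have "bracket k \<Lambda> M a = b"
      proof
        fix v show "bracket k \<Lambda> M a v = b v"
        proof (cases "v \<in> \<Lambda>")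
          case False
          then show ?thesis using b_out by (simp add: bracket_def)
        next
          case True
          show ?thesis
          proof (cases "v \<in> V")
            case True
            then obtain e i where ei: "e \<in> M" "i < k" "v = e i" by (auto simp: V_def)
            then show ?thesis using bracket_at[OF ei(1,2)] by (simp add: a_def \<beta>_def restr_tuple_def)
          next
            case False
            then have "v \<in> W" using \<open>v \<in> \<Lambda>\<close> by (simp add: W_def)
            then show ?thesis using bracket_W bW by simp
          qed
        qed
      qed
      then have "a \<notin> Xset N k M" using none by auto
      then obtain e where e: "e \<in> M" and c1: "card {i\<in>{..<k}. a e i \<noteq> 0} = 1"
        using amaps by (auto simp: Xset_def)
      have ae: "a e = \<beta> e" using e by (simp add: a_def)
      have "\<beta> e \<in> ZN_pow N {..<k}" using PiE_mem[OF amaps[unfolded maps_def] e] ae by simp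
      then have "muhat N k \<mu> (\<beta> e) = 0" using muhat_zero[OF assms(6) N] c1 ae by simp
      then have "P = 0" unfolding P_def using finM e by (auto intro: prod_zero)
      then show ?thesis by simp
    qed
    then show "inner_exp (ZN_pow N \<Lambda>) (Rop N k \<mu> M f) (chr N \<Lambda> b) = 0"
      unfolding inner_exp_def \<Phi>_def[symmetric] total by simp
  qed
qed


end
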